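(* Let $S$ be a numerical semigroup. If $S$ is telescopic, then $\mathrm{Ap}(S)$ is $\beta$-rectangular. The converse fails: $S=\langle 4,5,6\rangle$ has $\alpha$-rectangular (hence $\beta$-rectangular) Apéry set but is not telescopic.
   Context: A numerical semigroup is a submonoid $S$ of $(\mathbb N,+)$ with finite complement in $\mathbb N$; $g_1<\dots<g_\nu$ is its minimal system of generators, $m=g_1$, and $\mathrm{Ap}(S)=\{s\in S: s-m\notin S\}$. A representation of $s\in S$ is an expression $s=\sum_{i=1}^\nu\lambda_ig_i$, $\lambda_i\in\mathbb N$; $\mathrm{ord}(s)$ is the maximum of $\sum\lambda_i$ over all representations. For $i=2,\dots,\nu$: $\tau_i=\min\{h\in\mathbb N: hg_i\in\langle g_1,\dots,g_{i-1}\rangle\}-1$; $\alpha_i=\max\{h\in\mathbb N: hg_i\in\mathrm{Ap}(S)\}$; $\beta_i=\max\{h\in\mathbb N: hg_i\in\mathrm{Ap}(S),\ \mathrm{ord}(hg_i)=h\}$. $S$ is telescopic if $\mathrm{Ap}(S)=\{\sum_{i=2}^\nu\lambda_ig_i: 0\le\lambda_i\le\tau_i\}$. For $\delta\in\{\alpha,\beta\}$, $\mathrm{Ap}(S)$ is $\delta$-rectangular if $\mathrm{Ap}(S)=\{\sum_{i=2}^\nu\lambda_ig_i: 0\le\lambda_i\le\delta_i\}$. *)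

theory Defs
  imports Main
begin

definition numerical_semigroup :: "nat set \<Rightarrow> bool" where
  "numerical_semigroup S \<longleftrightarrow> 0 \<in> S \<and> (\<forall>a\<in>S. \<forall>b\<in>S. a + b \<in> S) \<and> finite (UNIV - S)"

definition msg :: "nat set \<Rightarrow> nat set" where
  "msg S = {x \<in> S. x \<noteq> 0 \<and> \<not> (\<exists>a\<in>S. \<exists>b\<in>S. a \<noteq> 0 \<and> b \<noteq> 0 \<and> x = a + b)}"

text \<open>Embedding dimension nu and the generators g_1 < ... < g_nu (1-indexed).\<close>
definition emb :: "nat set \<Rightarrow> nat" where
  "emb S = card (msg S)"

definition gen :: "nat set \<Rightarrow> nat \<Rightarrow> nat" where
  "gen S i = sorted_list_of_set (msg S) ! (i - 1)"

definition multiplicity :: "nat set \<Rightarrow> nat" where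
  "multiplicity S = gen S 1"

definition Apery :: "nat set \<Rightarrow> nat set" where
  "Apery S = {s \<in> S. \<not> (\<exists>t\<in>S. s = t + multiplicity S)}"

definition is_repr :: "nat set \<Rightarrow> nat \<Rightarrow> (nat \<Rightarrow> nat) \<Rightarrow> bool" where
  "is_repr S s l \<longleftrightarrow> s = (\<Sum>i=1..emb S. l i * gen S i)"

definition ord :: "nat set \<Rightarrow> nat \<Rightarrow> nat" where
  "ord S s = Max {(\<Sum>i=1..emb S. l i) | l. is_repr S s l}"

definition gen_upto :: "nat set \<Rightarrow> nat \<Rightarrow> nat set" where
  "gen_upto S k = {(\<Sum>j=1..k. l j * gen S j) | l. True}"

definition tau :: "nat set \<Rightarrow> nat \<Rightarrow> nat" where
  "tau S i = (LEAST h. h > 0 \<and> h * gen S i \<in> gen_upto S (i - 1)) - 1"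

definition alpha :: "nat set \<Rightarrow> nat \<Rightarrow> nat" where
  "alpha S i = Max {h. h * gen S i \<in> Apery S}"

definition beta :: "nat set \<Rightarrow> nat \<Rightarrow> nat" where
  "beta S i = Max {h. h * gen S i \<in> Apery S \<and> ord S (h * gen S i) = h}"

definition box :: "nat set \<Rightarrow> (nat \<Rightarrow> nat) \<Rightarrow> nat set" where
  "box S d = {(\<Sum>i=2..emb S. l i * gen S i) | l. \<forall>i\<in>{2..emb S}. l i \<le> d i}"

definition telescopic :: "nat set \<Rightarrow> bool" where
  "telescopic S \<longleftrightarrow> Apery S = box S (tau S)"

definition rectangular :: "nat set \<Rightarrow> (nat \<Rightarrow> nat) \<Rightarrow> bool" where
  "rectangular S d \<longleftrightarrow> Apery S = box S d"

end

theory Submission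
  imports Defs
begin


lemma box_cong: "(\<And>i. i \<in> {2..emb S} \<Longrightarrow> d i = d' i) \<Longrightarrow> box S d = box S d'"
proof -
  assume "\<And>i. i \<in> {2..emb S} \<Longrightarrow> d i = d' i"
  then have "\<And>l. (\<forall>i\<in>{2..emb S}. l i \<le> d i) = (\<forall>i\<in>{2..emb S}. l i \<le> d' i)" by simp
  then show ?thesis unfolding box_def by simp
qed

lemma mod_neg_nat: "(0::nat) < m \<Longrightarrow> (x + c) mod m = y mod m \<Longrightarrow> x mod m = (y + (m - 1) * c) mod m"
proof -
  assume m: "0 < m" and h: "(x + c) mod m = y mod m"
  have eq: "x + c + (m - 1) * c = x + c * m" using m by (cases m) (simp_all add: algebra_simps)
  have "x mod m = (x + c + (m - 1) * c) mod m" unfolding eq by simp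
  also have "\<dots> = ((x + c) mod m + (m - 1) * c) mod m" by (simp add: mod_add_left_eq)
  also have "\<dots> = (y mod m + (m - 1) * c) mod m" using h by simp
  also have "\<dots> = (y + (m - 1) * c) mod m" by (simp add: mod_add_left_eq)
  finally show ?thesis .
qed

lemma mod_cancel_nat: "(0::nat) < m \<Longrightarrow> (x + c) mod m = (y + c) mod m \<Longrightarrow> x mod m = y mod m"
proof -
  assume m: "0 < m" and h: "(x + c) mod m = (y + c) mod m"
  have "x mod m = (y + c + (m - 1) * c) mod m" using mod_neg_nat[OF m h] .
  also have "y + c + (m - 1) * c = y + c * m" using m by (cases m) (simp_all add: algebra_simps)
  finally show ?thesis by simp
qed

lemma sum_split3: "1 \<le> a \<Longrightarrow> a \<le> i \<Longrightarrow> i \<le> N \<Longrightarrow>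
  (\<Sum>j=a..N. f j) = (\<Sum>j=a..i-1. f j) + f i + (\<Sum>j=i+1..N. f j)" for f :: "nat \<Rightarrow> nat"
proof -
  assume A: "1 \<le> a" "a \<le> i" "i \<le> N"
  have e: "{a..N} = {a..i-1} \<union> ({i} \<union> {i+1..N})" using A by auto
  have "sum f ({a..i-1} \<union> ({i} \<union> {i+1..N})) = sum f {a..i-1} + sum f ({i} \<union> {i+1..N})"
    using A by (intro sum.union_disjoint) auto
  also have "sum f ({i} \<union> {i+1..N}) = f i + sum f {i+1..N}" by (subst sum.union_disjoint) auto
  finally show ?thesis using e by simp
qed

lemma sum_12: "1 \<le> k \<Longrightarrow> (\<Sum>j=1..k. f j) = f 1 + (\<Sum>j=2..k. f j)" for f :: "nat \<Rightarrow> nat"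
  using sum_split3[of 1 1 k f] by (simp add: numeral_2_eq_2)

lemma sum_delta_g: "a \<le> i \<Longrightarrow> i \<le> N \<Longrightarrow> (\<Sum>j=a..N. (if j = i then v else 0) * f j) = v * (f i :: nat)" for f :: "nat \<Rightarrow> nat"
proof -
  assume "a \<le> i" "i \<le> N"
  have "(\<Sum>j=a..N. (if j = i then v else 0) * f j) = (\<Sum>j\<in>{a..N}. if j = i then v * f j else 0)"
    by (rule sum.cong) auto
  also have "\<dots> = v * f i" using \<open>a \<le> i\<close> \<open>i \<le> N\<close> by (subst sum.delta) auto
  finally show ?thesis .
qed

lemma sum_delta_1: "a \<le> i \<Longrightarrow> i \<le> N \<Longrightarrow> (\<Sum>j::nat=a..N. (if j = i then v else (0::nat))) = v"
  by (subst sum.delta) auto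

locale tele =
  fixes S :: "nat set"
  assumes ns: "numerical_semigroup S" and tel: "telescopic S" and e2: "2 \<le> emb S"
begin

abbreviation "n \<equiv> emb S"
abbreviation "g \<equiv> gen S"
abbreviation "m \<equiv> multiplicity S"
abbreviation "T \<equiv> tau S"

lemma fin_msg: "finite (msg S)"
proof (rule ccontr)
  assume "infinite (msg S)"
  then have "emb S = 0" unfolding emb_def by simp
  then show False using e2 by simp
qed

lemma len: "length (sorted_list_of_set (msg S)) = n"
  unfolding emb_def by simp

lemma gen_in: "1 \<le> i \<Longrightarrow> i \<le> n \<Longrightarrow> g i \<in> msg S"
proof -
  assume "1 \<le> i" "i \<le> n"
  then have "i - 1 < length (sorted_list_of_set (msg S))" using len by simp
  then have "sorted_list_of_set (msg S) ! (i - 1) \<in> set (sorted_list_of_set (msg S))" by (rule nth_mem)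
  then show ?thesis unfolding gen_def using fin_msg by simp
qed

lemma gen_pos: "1 \<le> i \<Longrightarrow> i \<le> n \<Longrightarrow> 0 < g i"
  using gen_in unfolding msg_def by auto

lemma gen_S: "1 \<le> i \<Longrightarrow> i \<le> n \<Longrightarrow> g i \<in> S"
  using gen_in unfolding msg_def by auto

lemma gen_mono: "1 \<le> j \<Longrightarrow> j < i \<Longrightarrow> i \<le> n \<Longrightarrow> g j < g i"
proof -
  assume a: "1 \<le> j" "j < i" "i \<le> n"
  have "sorted_wrt (<) (sorted_list_of_set (msg S))" using fin_msg by simp
  moreover have "j - 1 < i - 1" "i - 1 < length (sorted_list_of_set (msg S))" using a len by auto
  ultimately show ?thesis unfolding gen_def using sorted_wrt_nth_less by blast
qed

lemma m_eq: "m = g 1" unfolding multiplicity_def ..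

lemma m_pos: "0 < m" using gen_pos e2 m_eq by simp

lemma S0: "0 \<in> S" and Sadd: "a \<in> S \<Longrightarrow> b \<in> S \<Longrightarrow> a + b \<in> S"
  using ns unfolding numerical_semigroup_def by auto

lemma mult_S: "x \<in> S \<Longrightarrow> k * x \<in> S"
  by (induction k) (auto simp: S0 Sadd)

lemma m_S: "m \<in> S" using gen_S e2 m_eq by simp

lemma ap_inj1: "a \<in> Apery S \<Longrightarrow> b \<in> Apery S \<Longrightarrow> a mod m = b mod m \<Longrightarrow> a \<le> b \<Longrightarrow> a = b"
proof (rule ccontr)
  assume A: "a \<in> Apery S" "b \<in> Apery S" "a mod m = b mod m" "a \<le> b" "a \<noteq> b"
  then have "m dvd b - a" using mod_eq_dvd_iff_nat[of a b m] by simp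
  then obtain q where q: "b - a = m * q" by blast
  moreover have "b - a \<noteq> 0" using A by simp
  ultimately have "q \<noteq> 0" by auto
  then obtain p where p: "q = Suc p" using not0_implies_Suc by blast
  have "b = a + (b - a)" using A by simp
  also have "\<dots> = a + m * q" using q by simp
  also have "\<dots> = (a + p * m) + m" using p by simp
  finally have b: "b = (a + (q - 1) * m) + m" using p by simp
  have "a + (q - 1) * m \<in> S" using A Sadd mult_S m_S unfolding Apery_def by auto
  then show False using A(2) b unfolding Apery_def by blast
qed

lemma ap_inj: "a \<in> Apery S \<Longrightarrow> b \<in> Apery S \<Longrightarrow> a mod m = b mod m \<Longrightarrow> a = b"
proof -
  assume A: "a \<in> Apery S" "b \<in> Apery S" "a mod m = b mod m"
  show ?thesis
  proof (cases "a \<le> b")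
    case True then show ?thesis using ap_inj1 A by blast
  next
    case False then have "b \<le> a" by simp
    then show ?thesis using ap_inj1[of b a] A by simp
  qed
qed

lemma tau_prop:
  assumes i: "2 \<le> i" "i \<le> n"
  shows "\<exists>C. (T i + 1) * g i = (\<Sum>j=1..i-1. C j * g j)"
    and "\<And>h. 0 < h \<Longrightarrow> h < T i + 1 \<Longrightarrow> h * g i \<notin> gen_upto S (i-1)"
proof -
  define P where "P h \<longleftrightarrow> 0 < h \<and> h * g i \<in> gen_upto S (i-1)" for h
  have "(\<Sum>j=1..i-1. (if j = 1 then g i else 0) * g j) = (\<Sum>j\<in>{1..i-1}. if j = 1 then g i * g j else 0)"
    by (rule sum.cong) auto
  also have "\<dots> = g i * g 1" using i by (subst sum.delta) auto
  finally have "(\<Sum>j=1..i-1. (if j = 1 then g i else 0) * g j) = g i * g 1" .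
  then have "\<exists>l. g 1 * g i = (\<Sum>j=1..i-1. l j * g j) \<and> True"
    by (intro exI[of _ "\<lambda>j. if j = 1 then g i else 0"]) (simp add: mult.commute)
  then have "g 1 * g i \<in> gen_upto S (i-1)" unfolding gen_upto_def by simp
  then have "P (g 1)" unfolding P_def using gen_pos e2 by auto
  then have PL: "P (Least P)" by (rule LeastI)
  then have TL: "T i + 1 = Least P" unfolding tau_def P_def by simp
  show "\<exists>C. (T i + 1) * g i = (\<Sum>j=1..i-1. C j * g j)"
    using PL unfolding TL P_def gen_upto_def by auto
  fix h assume "0 < h" "h < T i + 1"
  then have "\<not> P h" unfolding TL by (rule_tac not_less_Least) simp
  then show "h * g i \<notin> gen_upto S (i-1)" using \<open>0 < h\<close> unfolding P_def by simp
qed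

lemma C_big:
  assumes i: "2 \<le> i" "i \<le> n" and C: "(T i + 1) * g i = (\<Sum>j=1..i-1. C j * g j)"
  shows "T i + 1 < (\<Sum>j=1..i-1. C j)"
proof -
  have gi: "0 < g i" using gen_pos i by simp
  have "\<exists>j\<in>{1..i-1}. C j \<noteq> 0"
  proof (rule ccontr)
    assume "\<not> ?thesis"
    then have "\<forall>j\<in>{1..i-1}. C j * g j = 0" by simp
    then have "(\<Sum>j=1..i-1. C j * g j) = 0" by simp
    with C have "(T i + 1) * g i = 0" by (rule trans)
    then show False using gi by simp
  qed
  then have "\<exists>j\<in>{1..i-1}. C j * g j < C j * g i" using gen_mono i by fastforce
  then have "(\<Sum>j=1..i-1. C j * g j) < (\<Sum>j=1..i-1. C j * g i)"
  proof (intro sum_strict_mono_ex1)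
    show "\<forall>j\<in>{1..i-1}. C j * g j \<le> C j * g i"
    proof
      fix j assume "j \<in> {1..i-1}"
      then have "g j < g i" using gen_mono i by auto
      then show "C j * g j \<le> C j * g i" by simp
    qed
  qed auto
  also have "\<dots> = (\<Sum>j=1..i-1. C j) * g i" by (simp add: sum_distrib_right)
  finally have "(T i + 1) * g i < (\<Sum>j=1..i-1. C j) * g i" unfolding C .
  then show ?thesis by (simp only: mult_less_cancel2)
qed


lemma reduce: "k \<le> n \<Longrightarrow> \<exists>\<mu>. (\<Sum>j=1..k. \<mu> j * g j) = (\<Sum>j=1..k. c j * g j) \<and> (\<Sum>j=1..k. c j) \<le> (\<Sum>j=1..k. \<mu> j) \<and> (\<forall>j\<in>{2..k}. \<mu> j \<le> T j)"
proof (induction k arbitrary: c)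
  case 0 show ?case by (rule exI[of _ c]) simp
next
  case (Suc k)
  show ?case
  proof (cases "k = 0")
    case True then show ?thesis by (rule_tac x=c in exI) simp
  next
    case False
    have K: "2 \<le> Suc k" "Suc k \<le> n" using False Suc.prems by auto
    obtain C where C': "(T (Suc k) + 1) * g (Suc k) = (\<Sum>j=1..Suc k - 1. C j * g j)" using tau_prop(1)[OF K] by blast
    then have C: "(T (Suc k) + 1) * g (Suc k) = (\<Sum>j=1..k. C j * g j)" by simp
    have "T (Suc k) + 1 < (\<Sum>j=1..Suc k - 1. C j)" by (rule C_big[OF K C'])
    then have Cb: "T (Suc k) + 1 \<le> (\<Sum>j=1..k. C j)" by simp
    define q where "q = c (Suc k) div (T (Suc k) + 1)"
    define r where "r = c (Suc k) mod (T (Suc k) + 1)"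
    have cK: "c (Suc k) = q * (T (Suc k) + 1) + r" unfolding q_def r_def by (rule div_mult_mod_eq[symmetric])
    have r: "r \<le> T (Suc k)" unfolding r_def by simp
    define c2 where "c2 j = c j + q * C j" for j
    obtain \<mu>0 where m0: "(\<Sum>j=1..k. \<mu>0 j * g j) = (\<Sum>j=1..k. c2 j * g j)" "(\<Sum>j=1..k. c2 j) \<le> (\<Sum>j=1..k. \<mu>0 j)" "\<forall>j\<in>{2..k}. \<mu>0 j \<le> T j"
      using Suc.IH[of c2] Suc.prems by (meson Suc_leD)
    define \<mu> where "\<mu> = \<mu>0(Suc k := r)"
    have s1: "(\<Sum>j=1..k. \<mu> j * g j) = (\<Sum>j=1..k. \<mu>0 j * g j)" unfolding \<mu>_def by (rule sum.cong) auto
    have s2: "(\<Sum>j=1..k. \<mu> j) = (\<Sum>j=1..k. \<mu>0 j)" unfolding \<mu>_def by (rule sum.cong) auto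
    have v: "(\<Sum>j=1..k. c2 j * g j) = (\<Sum>j=1..k. c j * g j) + q * ((T (Suc k) + 1) * g (Suc k))"
      unfolding c2_def C by (simp add: algebra_simps sum.distrib sum_distrib_left)
    have t: "(\<Sum>j=1..k. c2 j) = (\<Sum>j=1..k. c j) + q * (\<Sum>j=1..k. C j)"
      unfolding c2_def by (simp add: sum.distrib sum_distrib_left)
    have qb: "q * (T (Suc k) + 1) \<le> q * (\<Sum>j=1..k. C j)" using Cb by (rule mult_le_mono2)
    show ?thesis
    proof (rule exI[of _ \<mu>], intro conjI)
      have e1: "\<mu> (Suc k) = r" unfolding \<mu>_def by simp
      have "(\<Sum>j=1..Suc k. \<mu> j * g j) = (\<Sum>j=1..k. \<mu> j * g j) + \<mu> (Suc k) * g (Suc k)" by simp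
      also have "\<dots> = (\<Sum>j=1..k. c2 j * g j) + r * g (Suc k)" unfolding s1 m0(1) e1 ..
      also have "\<dots> = (\<Sum>j=1..k. c j * g j) + (q * (T (Suc k) + 1) + r) * g (Suc k)"
        unfolding v by (simp only: add_mult_distrib mult.assoc add.assoc)
      also have "\<dots> = (\<Sum>j=1..k. c j * g j) + c (Suc k) * g (Suc k)"
        unfolding cK ..
      also have "\<dots> = (\<Sum>j=1..Suc k. c j * g j)" by simp
      finally show "(\<Sum>j=1..Suc k. \<mu> j * g j) = (\<Sum>j=1..Suc k. c j * g j)" .
      have "(\<Sum>j=1..Suc k. c j) = (\<Sum>j=1..k. c j) + c (Suc k)" by simp
      also have "\<dots> = (\<Sum>j=1..k. c j) + q * (T (Suc k) + 1) + r" unfolding cK by (simp only: add.assoc)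
      also have "\<dots> \<le> (\<Sum>j=1..k. \<mu>0 j) + r" using m0(2) t qb by linarith
      also have "\<dots> = (\<Sum>j=1..k. \<mu> j) + \<mu> (Suc k)" unfolding s2 e1 ..
      also have "\<dots> = (\<Sum>j=1..Suc k. \<mu> j)" by simp
      finally show "(\<Sum>j=1..Suc k. c j) \<le> (\<Sum>j=1..Suc k. \<mu> j)" .
      show "\<forall>j\<in>{2..Suc k}. \<mu> j \<le> T j"
      proof
        fix j assume j: "j \<in> {2..Suc k}"
        show "\<mu> j \<le> T j"
        proof (cases "j = Suc k")
          case True then show ?thesis using r by (simp add: \<mu>_def)
        next
          case False then have "j \<in> {2..k}" using j by auto
          then show ?thesis using m0(3) False by (simp add: \<mu>_def)
        qed
      qed
    qed
  qed
qed


lemma contra: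
  assumes K: "2 \<le> K" "K \<le> n"
    and a: "\<forall>j\<in>{2..K}. a j \<le> T j" and b: "\<forall>j\<in>{2..K}. b j \<le> T j"
    and lt: "b K < a K"
    and eq: "((\<Sum>j=2..K-1. a j * g j) + a K * g K) mod m = ((\<Sum>j=2..K-1. b j * g j) + b K * g K) mod m"
  shows False
proof -
  define A where "A = (\<Sum>j=2..K-1. a j * g j)"
  define B where "B = (\<Sum>j=2..K-1. b j * g j)"
  define d where "d = a K - b K"
  have "a K \<le> T K" using a K by auto
  then have d0: "0 < d" and dT: "d < T K + 1" using lt unfolding d_def by auto
  have dd: "d * g K + b K * g K = a K * g K"
  proof -
    have "d * g K + b K * g K = (d + b K) * g K" by (simp add: add_mult_distrib)
    also have "d + b K = a K" unfolding d_def using lt by simp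
    finally show ?thesis .
  qed
  have "(A + d * g K + b K * g K) mod m = (B + b K * g K) mod m"
    using eq unfolding A_def B_def add.assoc dd by simp
  then have "(A + d * g K) mod m = B mod m" by (rule mod_cancel_nat[OF m_pos])
  then have "(d * g K + A) mod m = B mod m" by (simp add: add.commute)
  then have e2: "(d * g K) mod m = (B + (m - 1) * A) mod m" by (rule mod_neg_nat[OF m_pos])
  define c where "c j = (if j = 1 then 0 else b j + (m - 1) * a j)" for j
  have K1: "1 \<le> K - 1" using K by simp
  have "(\<Sum>j=1..K-1. c j * g j) = c 1 * g 1 + (\<Sum>j=2..K-1. c j * g j)" by (rule sum_12[OF K1])
  also have "(\<Sum>j=2..K-1. c j * g j) = (\<Sum>j=2..K-1. b j * g j + (m - 1) * (a j * g j))"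
    unfolding c_def by (rule sum.cong) (auto simp: algebra_simps)
  also have "\<dots> = B + (m - 1) * A" unfolding A_def B_def by (simp add: sum.distrib sum_distrib_left)
  finally have cv: "(\<Sum>j=1..K-1. c j * g j) = B + (m - 1) * A" unfolding c_def by simp
  obtain \<mu> where mu: "(\<Sum>j=1..K-1. \<mu> j * g j) = (\<Sum>j=1..K-1. c j * g j)" "\<forall>j\<in>{2..K-1}. \<mu> j \<le> T j"
  proof -
    have "K - 1 \<le> n" using K by simp
    from reduce[OF this, of c] show ?thesis using that by blast
  qed
  define X where "X = (\<Sum>j=2..K-1. \<mu> j * g j)"
  have "(\<Sum>j=1..K-1. \<mu> j * g j) = \<mu> 1 * g 1 + X" unfolding X_def by (rule sum_12[OF K1])
  then have "(\<mu> 1 * m + X) = B + (m - 1) * A" using mu(1) cv m_eq by simp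
  moreover have "X mod m = (\<mu> 1 * m + X) mod m" by simp
  ultimately have "X mod m = (B + (m - 1) * A) mod m" by simp
  then have Xd: "X mod m = (d * g K) mod m" using e2 by simp
  have XS: "X \<in> box S T"
  proof -
    define l where "l j = (if j < K then \<mu> j else 0)" for j
    have "(\<Sum>j=2..n. l j * g j) = (\<Sum>j=2..K-1. l j * g j) + l K * g K + (\<Sum>j=K+1..n. l j * g j)"
      using K by (intro sum_split3) auto
    also have "(\<Sum>j=2..K-1. l j * g j) = X" unfolding X_def l_def by (rule sum.cong) auto
    also have "(\<Sum>j=K+1..n. l j * g j) = 0" unfolding l_def by simp
    finally have "X = (\<Sum>j=2..n. l j * g j)" unfolding l_def by simp
    moreover have "\<forall>i\<in>{2..n}. l i \<le> T i" unfolding l_def using mu(2) by auto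
    ultimately show ?thesis unfolding box_def by blast
  qed
  have dS: "d * g K \<in> box S T"
  proof -
    have "d * g K = (\<Sum>j=2..n. (if j = K then d else 0) * g j)" using K by (simp add: sum_delta_g)
    moreover have "\<forall>i\<in>{2..n}. (if i = K then d else 0) \<le> T i" using dT by auto
    ultimately show ?thesis unfolding box_def mem_Collect_eq
      by (intro exI[of _ "\<lambda>j. if j = K then d else 0"]) blast
  qed
  have "X = d * g K" using ap_inj XS dS Xd tel unfolding telescopic_def by simp
  moreover have "X \<in> gen_upto S (K - 1)"
  proof -
    have "(\<Sum>j=1..K-1. (\<mu>(1 := 0)) j * g j) = (\<mu>(1 := 0)) 1 * g 1 + (\<Sum>j=2..K-1. (\<mu>(1 := 0)) j * g j)"
      by (rule sum_12[OF K1])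
    also have "(\<Sum>j=2..K-1. (\<mu>(1 := 0)) j * g j) = X" unfolding X_def by (rule sum.cong) auto
    finally have "X = (\<Sum>j=1..K-1. (\<mu>(1 := 0)) j * g j)" by simp
    then show ?thesis unfolding gen_upto_def by blast
  qed
  ultimately show False using tau_prop(2)[OF K d0 dT] by simp
qed


lemma uniq: "k \<le> n \<Longrightarrow> \<forall>j\<in>{2..k}. a j \<le> T j \<Longrightarrow> \<forall>j\<in>{2..k}. b j \<le> T j \<Longrightarrow>
  (\<Sum>j=2..k. a j * g j) mod m = (\<Sum>j=2..k. b j * g j) mod m \<Longrightarrow> \<forall>j\<in>{2..k}. a j = b j"
proof (induction k)
  case 0 then show ?case by simp
next
  case (Suc k)
  show ?case
  proof (cases "k = 0")
    case True then show ?thesis by simp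
  next
    case False
    have K: "2 \<le> Suc k" "Suc k \<le> n" using False Suc.prems by auto
    have sa: "(\<Sum>j=2..Suc k. a j * g j) = (\<Sum>j=2..Suc k - 1. a j * g j) + a (Suc k) * g (Suc k)"
      using K by simp
    have sb: "(\<Sum>j=2..Suc k. b j * g j) = (\<Sum>j=2..Suc k - 1. b j * g j) + b (Suc k) * g (Suc k)"
      using K by simp
    have eq: "((\<Sum>j=2..Suc k - 1. a j * g j) + a (Suc k) * g (Suc k)) mod m =
      ((\<Sum>j=2..Suc k - 1. b j * g j) + b (Suc k) * g (Suc k)) mod m"
      using Suc.prems(4) unfolding sa sb .
    have ab: "a (Suc k) = b (Suc k)"
    proof (rule ccontr)
      assume ne: "a (Suc k) \<noteq> b (Suc k)"
      show False
      proof (cases "b (Suc k) < a (Suc k)")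
        case True
        show False by (rule contra[OF K Suc.prems(2) Suc.prems(3) True eq])
      next
        case False then have lt: "a (Suc k) < b (Suc k)" using ne by simp
        show False by (rule contra[OF K Suc.prems(3) Suc.prems(2) lt eq[symmetric]])
      qed
    qed
    have "((\<Sum>j=2..k. a j * g j) + b (Suc k) * g (Suc k)) mod m =
      ((\<Sum>j=2..k. b j * g j) + b (Suc k) * g (Suc k)) mod m"
      using eq ab by simp
    then have "(\<Sum>j=2..k. a j * g j) mod m = (\<Sum>j=2..k. b j * g j) mod m"
      by (rule mod_cancel_nat[OF m_pos])
    moreover have "k \<le> n" using K by simp
    moreover have "\<forall>j\<in>{2..k}. a j \<le> T j" "\<forall>j\<in>{2..k}. b j \<le> T j" using Suc.prems(2,3) by auto
    ultimately have IH: "\<forall>j\<in>{2..k}. a j = b j" using Suc.IH by blast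
    show ?thesis
    proof
      fix j assume j: "j \<in> {2..Suc k}"
      show "a j = b j"
      proof (cases "j = Suc k")
        case True then show ?thesis using ab by simp
      next
        case False then have "j \<in> {2..k}" using j by auto
        then show ?thesis using IH by blast
      qed
    qed
  qed
qed

lemma repr_bound: "is_repr S x l \<Longrightarrow> (\<Sum>i=1..n. l i) \<le> x"
proof -
  assume r: "is_repr S x l"
  have "(\<Sum>i=1..n. l i) \<le> (\<Sum>i=1..n. l i * g i)"
  proof (rule sum_mono)
    fix i assume "i \<in> {1..n}"
    then have "0 < g i" using gen_pos by auto
    then show "l i \<le> l i * g i" by simp
  qed
  then show ?thesis using r unfolding is_repr_def by simp
qed

lemma ord_fin: "finite {(\<Sum>i=1..n. l i) | l. is_repr S x l}"
  by (rule finite_subset[of _ "{..x}"]) (auto dest: repr_bound)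

lemma ord_ge: "is_repr S x l \<Longrightarrow> (\<Sum>i=1..n. l i) \<le> ord S x"
  unfolding ord_def by (rule Max_ge[OF ord_fin]) blast

lemma ord_eq: "is_repr S x l0 \<Longrightarrow> (\<And>l. is_repr S x l \<Longrightarrow> (\<Sum>i=1..n. l i) \<le> t) \<Longrightarrow> (\<Sum>i=1..n. l0 i) = t \<Longrightarrow> ord S x = t"
  unfolding ord_def by (rule Max_eqI[OF ord_fin]) blast+

lemma big_h:
  assumes i: "2 \<le> i" "i \<le> n" and h: "T i < h"
  shows "h < ord S (h * g i)"
proof -
  obtain C where C: "(T i + 1) * g i = (\<Sum>j=1..i-1. C j * g j)" using tau_prop(1)[OF i] by blast
  have Cb: "T i + 1 < (\<Sum>j=1..i-1. C j)" by (rule C_big[OF i C])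
  define \<nu> where "\<nu> j = (if j < i then C j else if j = i then h - (T i + 1) else 0)" for j
  have i1: "1 \<le> (1::nat)" "1 \<le> i" using i by auto
  have "(\<Sum>j=1..n. \<nu> j * g j) = (\<Sum>j=1..i-1. \<nu> j * g j) + \<nu> i * g i + (\<Sum>j=i+1..n. \<nu> j * g j)"
    using i by (intro sum_split3) auto
  also have "(\<Sum>j=1..i-1. \<nu> j * g j) = (\<Sum>j=1..i-1. C j * g j)" unfolding \<nu>_def by (rule sum.cong) auto
  also have "(\<Sum>j=i+1..n. \<nu> j * g j) = 0" unfolding \<nu>_def by simp
  also have "\<nu> i = h - (T i + 1)" unfolding \<nu>_def by simp
  finally have "(\<Sum>j=1..n. \<nu> j * g j) = (T i + 1) * g i + (h - (T i + 1)) * g i" using C by simp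
  also have "\<dots> = ((T i + 1) + (h - (T i + 1))) * g i" by (simp only: add_mult_distrib)
  also have "(T i + 1) + (h - (T i + 1)) = h" using h by simp
  finally have "(\<Sum>j=1..n. \<nu> j * g j) = h * g i" .
  then have rep: "is_repr S (h * g i) \<nu>" unfolding is_repr_def by simp
  have "(\<Sum>j=1..n. \<nu> j) = (\<Sum>j=1..i-1. \<nu> j) + \<nu> i + (\<Sum>j=i+1..n. \<nu> j)"
    using i by (intro sum_split3) auto
  also have "(\<Sum>j=1..i-1. \<nu> j) = (\<Sum>j=1..i-1. C j)" unfolding \<nu>_def by (rule sum.cong) auto
  also have "(\<Sum>j=i+1..n. \<nu> j) = 0" unfolding \<nu>_def by simp
  also have "\<nu> i = h - (T i + 1)" unfolding \<nu>_def by simp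
  finally have "(\<Sum>j=1..n. \<nu> j) = (\<Sum>j=1..i-1. C j) + (h - (T i + 1))" by simp
  then have "h < (\<Sum>j=1..n. \<nu> j)" using Cb h by simp
  also have "\<dots> \<le> ord S (h * g i)" by (rule ord_ge[OF rep])
  finally show ?thesis .
qed

lemma tau_ord:
  assumes i: "2 \<le> i" "i \<le> n"
  shows "ord S (T i * g i) = T i"
proof -
  define \<rho> where "\<rho> j = (if j = i then T i else 0)" for j
  have rv: "(\<Sum>j=1..n. \<rho> j * g j) = T i * g i" unfolding \<rho>_def using i by (simp add: sum_delta_g)
  have rv2: "(\<Sum>j=2..n. \<rho> j * g j) = T i * g i" unfolding \<rho>_def using i by (simp add: sum_delta_g)
  have rs: "(\<Sum>j=1..n. \<rho> j) = T i" unfolding \<rho>_def using i by (simp add: sum_delta_1)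
  have rs2: "(\<Sum>j=2..n. \<rho> j) = T i" unfolding \<rho>_def using i by (simp add: sum_delta_1)
  have rep: "is_repr S (T i * g i) \<rho>" unfolding is_repr_def using rv by simp
  have n1: "1 \<le> n" using e2 by simp
  show ?thesis
  proof (rule ord_eq[OF rep _ rs])
    fix l assume l: "is_repr S (T i * g i) l"
    obtain \<mu> where mu: "(\<Sum>j=1..n. \<mu> j * g j) = (\<Sum>j=1..n. l j * g j)"
      "(\<Sum>j=1..n. l j) \<le> (\<Sum>j=1..n. \<mu> j)" "\<forall>j\<in>{2..n}. \<mu> j \<le> T j"
      using reduce[of n l] by blast
    have v: "\<mu> 1 * m + (\<Sum>j=2..n. \<mu> j * g j) = T i * g i"
      using mu(1) l sum_12[OF n1, of "\<lambda>j. \<mu> j * g j"] m_eq unfolding is_repr_def by simp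
    moreover have "(\<Sum>j=2..n. \<mu> j * g j) mod m = (\<mu> 1 * m + (\<Sum>j=2..n. \<mu> j * g j)) mod m" by simp
    ultimately have "(\<Sum>j=2..n. \<mu> j * g j) mod m = (\<Sum>j=2..n. \<rho> j * g j) mod m"
      unfolding rv2 by simp
    moreover have "\<forall>j\<in>{2..n}. \<rho> j \<le> T j" unfolding \<rho>_def by auto
    ultimately have eqr: "\<forall>j\<in>{2..n}. \<mu> j = \<rho> j" using uniq[of n \<mu> \<rho>] mu(3) by blast
    then have "(\<Sum>j=2..n. \<mu> j * g j) = (\<Sum>j=2..n. \<rho> j * g j)" by (intro sum.cong) auto
    then have "\<mu> 1 * m = 0" using v rv2 by simp
    then have m1: "\<mu> 1 = 0" using m_pos by simp
    have "(\<Sum>j=2..n. \<mu> j) = (\<Sum>j=2..n. \<rho> j)" using eqr by (intro sum.cong) auto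
    then have "(\<Sum>j=1..n. \<mu> j) = T i" using sum_12[OF n1, of \<mu>] m1 rs2 by simp
    then show "(\<Sum>j=1..n. l j) \<le> T i" using mu(2) by simp
  qed
qed

lemma beta_tau:
  assumes i: "2 \<le> i" "i \<le> n"
  shows "beta S i = T i"
proof -
  have inAp: "T i * g i \<in> Apery S"
  proof -
    have "T i * g i = (\<Sum>j=2..n. (if j = i then T i else 0) * g j)" using i by (simp add: sum_delta_g)
    moreover have "\<forall>j\<in>{2..n}. (if j = i then T i else 0) \<le> T j" by auto
    ultimately have "T i * g i \<in> box S T" unfolding box_def mem_Collect_eq
      by (intro exI[of _ "\<lambda>j. if j = i then T i else 0"]) blast
    then show ?thesis using tel unfolding telescopic_def by simp
  qed
  define B where "B = {h. h * g i \<in> Apery S \<and> ord S (h * g i) = h}"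
  have sub: "B \<subseteq> {..T i}"
  proof
    fix h assume "h \<in> B"
    then have "ord S (h * g i) = h" unfolding B_def by simp
    then have "\<not> T i < h" using big_h[OF i, of h] by auto
    then show "h \<in> {..T i}" by simp
  qed
  have "T i \<in> B" unfolding B_def using inAp tau_ord[OF i] by simp
  then have "Max B = T i" using sub by (intro Max_eqI) (auto intro: finite_subset)
  then show ?thesis unfolding beta_def B_def .
qed

end

lemma part1: "numerical_semigroup S \<and> telescopic S \<longrightarrow> rectangular S (beta S)"
proof
  assume A: "numerical_semigroup S \<and> telescopic S"
  show "rectangular S (beta S)"
  proof (cases "2 \<le> emb S")
    case True
    interpret tele S using A True by unfold_locales auto
    have "box S (beta S) = box S (tau S)" by (rule box_cong) (auto simp: beta_tau)
    then show ?thesis using tel unfolding telescopic_def rectangular_def by simp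
  next
    case False
    then have "box S (beta S) = box S (tau S)" by (intro box_cong) auto
    then show ?thesis using A unfolding telescopic_def rectangular_def by simp
  qed
qed



definition S0 :: "nat set" where "S0 = {4 * a + 5 * b + 6 * c | a b c :: nat. True}"

lemma S0_char: "S0 = {x. x = 0 \<or> x = 4 \<or> x = 5 \<or> x = 6 \<or> 8 \<le> x}"
proof (intro set_eqI iffI)
  fix x assume "x \<in> S0"
  then obtain a b c where x: "x = 4*a+5*b+6*c" unfolding S0_def by blast
  show "x \<in> {x. x = 0 \<or> x = 4 \<or> x = 5 \<or> x = 6 \<or> 8 \<le> x}"
  proof (cases "a + b + c \<ge> 2")
    case True then have "8 \<le> x" using x by linarith
    then show ?thesis by simp
  next
    case False then have "a \<le> 1" "b \<le> 1" "c \<le> 1" "a + b + c \<le> 1" by linarith+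
    then have "x = 0 \<or> x = 4 \<or> x = 5 \<or> x = 6" using x
      by (cases a; cases b; cases c) simp_all
    then show ?thesis by blast
  qed
next
  fix x :: nat assume "x \<in> {x. x = 0 \<or> x = 4 \<or> x = 5 \<or> x = 6 \<or> 8 \<le> x}"
  then have h: "x = 0 \<or> x = 4 \<or> x = 5 \<or> x = 6 \<or> 8 \<le> x" by simp
  have "\<exists>a b c. x = 4*a+5*b+6*c"
  proof (cases "8 \<le> x")
    case False
    then have "x = 0 \<or> x = 4 \<or> x = 5 \<or> x = 6" using h by simp
    then show ?thesis
    proof (elim disjE)
      assume "x = 0" then show ?thesis by (intro exI[of _ 0]) simp
    next
      assume "x = 4" then show ?thesis by (intro exI[of _ 1] exI[of _ 0]) simp
    next
      assume "x = 5" then show ?thesis by (intro exI[of _ 0] exI[of _ 1]) simp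
    next
      assume "x = 6" then show ?thesis by (intro exI[of _ 0] exI[of _ 0] exI[of _ 1]) simp
    qed
  next
    case True
    define q where "q = x div 4"
    define r where "r = x mod 4"
    have xq: "x = 4 * q + r" unfolding q_def r_def by simp
    have r4: "r < 4" unfolding r_def by simp
    have "q \<ge> 2" using True xq r4 by linarith
    then obtain p where p: "q = p + 2" using le_Suc_ex by (metis add.commute)
    have "r = 0 \<or> r = 1 \<or> r = 2 \<or> r = 3" using r4 by linarith
    then show ?thesis
    proof (elim disjE)
      assume "r = 0" then show ?thesis using xq p by (intro exI[of _ "p+2"] exI[of _ 0]) simp
    next
      assume "r = 1" then show ?thesis using xq p by (intro exI[of _ "p+1"] exI[of _ 1] exI[of _ 0]) simp
    next
      assume "r = 2" then show ?thesis using xq p by (intro exI[of _ "p+1"] exI[of _ 0] exI[of _ 1]) simp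
    next
      assume "r = 3" then show ?thesis using xq p by (intro exI[of _ p] exI[of _ 1] exI[of _ 1]) simp
    qed
  qed
  then show "x \<in> S0" unfolding S0_def by blast
qed

lemma S0_ns: "numerical_semigroup S0"
proof -
  have "0 \<in> S0" unfolding S0_char by simp
  moreover have "\<forall>a\<in>S0. \<forall>b\<in>S0. a + b \<in> S0"
  proof (intro ballI)
    fix x y assume "x \<in> S0" "y \<in> S0"
    then obtain a b c a' b' c' where "x = 4*a+5*b+6*c" "y = 4*a'+5*b'+6*c'" unfolding S0_def by blast
    then have "x + y = 4*(a+a')+5*(b+b')+6*(c+c')" by simp
    then show "x + y \<in> S0" unfolding S0_def by blast
  qed
  moreover have "finite (UNIV - S0)"
    by (rule finite_subset[of _ "{..7}"]) (auto simp: S0_char)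
  ultimately show ?thesis unfolding numerical_semigroup_def by blast
qed

lemma S0_msg: "msg S0 = {4,5,6}"
proof (intro set_eqI iffI)
  fix x assume "x \<in> msg S0"
  then have H: "x \<in> S0 \<and> x \<noteq> 0 \<and> \<not> (\<exists>a\<in>S0. \<exists>b\<in>S0. a \<noteq> 0 \<and> b \<noteq> 0 \<and> x = a + b)"
    unfolding msg_def by (rule CollectD)
  from H have x: "x \<in> S0" "x \<noteq> 0" by blast+
  from H have nd: "\<not> (\<exists>a\<in>S0. \<exists>b\<in>S0. a \<noteq> 0 \<and> b \<noteq> 0 \<and> x = a + b)" by blast
  show "x \<in> {4,5,6}"
  proof (rule ccontr)
    assume "x \<notin> {4,5,6}"
    moreover have "x = 0 \<or> x = 4 \<or> x = 5 \<or> x = 6 \<or> 8 \<le> x" using x(1) unfolding S0_char by simp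
    ultimately have "8 \<le> x" using x(2) by auto
    show False
    proof (cases "x = 11")
      case True
      have "(5::nat) \<in> S0" "(6::nat) \<in> S0" unfolding S0_char by auto
      then have "\<exists>a\<in>S0. \<exists>b\<in>S0. a \<noteq> 0 \<and> b \<noteq> 0 \<and> x = a + b"
        using True by (rule_tac bexI[of _ 5], rule_tac bexI[of _ 6]) simp_all
      then show False using nd by simp
    next
      case False
      then have "x - 4 = 4 \<or> x - 4 = 5 \<or> x - 4 = 6 \<or> 8 \<le> x - 4" using \<open>8 \<le> x\<close> by presburger
      then have "x - 4 \<in> S0" unfolding S0_char by auto
      moreover have "(4::nat) \<in> S0" unfolding S0_char by auto
      moreover have "x = 4 + (x - 4)" "x - 4 \<noteq> 0" using \<open>8 \<le> x\<close> by auto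
      ultimately have "\<exists>a\<in>S0. \<exists>b\<in>S0. a \<noteq> 0 \<and> b \<noteq> 0 \<and> x = a + b"
        by (rule_tac bexI[of _ 4], rule_tac bexI[of _ "x - 4"]) simp_all
      then show False using nd by simp
    qed
  qed
next
  fix x :: nat assume x: "x \<in> {4,5,6}"
  have ge4: "\<And>a. a \<in> S0 \<Longrightarrow> a \<noteq> 0 \<Longrightarrow> 4 \<le> a" unfolding S0_char by auto
  have "x \<in> S0" using x unfolding S0_char by auto
  moreover have "x \<noteq> 0" "x \<le> 6" using x by auto
  moreover have "\<not> (\<exists>a\<in>S0. \<exists>b\<in>S0. a \<noteq> 0 \<and> b \<noteq> 0 \<and> x = a + b)"
  proof
    assume "\<exists>a\<in>S0. \<exists>b\<in>S0. a \<noteq> 0 \<and> b \<noteq> 0 \<and> x = a + b"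
    then obtain a b where "a \<in> S0" "b \<in> S0" "a \<noteq> 0" "b \<noteq> 0" "x = a + b" by blast
    then have "4 \<le> a" "4 \<le> b" "x = a + b" using ge4 by auto
    then show False using \<open>x \<le> 6\<close> by linarith
  qed
  ultimately show "x \<in> msg S0" unfolding msg_def by blast
qed


lemma S0_sl: "sorted_list_of_set (msg S0) = [4,5,6]"
  unfolding S0_msg by simp

lemma S0_emb: "emb S0 = 3" unfolding emb_def S0_msg by simp
lemma S0_g1: "gen S0 1 = 4" unfolding gen_def S0_sl by simp
lemma S0_g2: "gen S0 2 = 5" unfolding gen_def S0_sl by simp
lemma S0_g3: "gen S0 3 = 6" unfolding gen_def S0_sl by simp
lemma S0_m: "multiplicity S0 = 4" unfolding multiplicity_def S0_g1 by simp

lemma S0_Ap: "Apery S0 = {0,5,6,11}"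
proof -
  have "Apery S0 = {s. s \<in> S0 \<and> \<not> (4 \<le> s \<and> s - 4 \<in> S0)}"
  proof -
    have "\<And>s. (\<exists>t\<in>S0. s = t + 4) \<longleftrightarrow> (4 \<le> s \<and> s - 4 \<in> S0)"
    proof
      fix s :: nat
      assume "\<exists>t\<in>S0. s = t + 4"
      then show "4 \<le> s \<and> s - 4 \<in> S0" by auto
    next
      fix s :: nat
      assume h: "4 \<le> s \<and> s - 4 \<in> S0"
      then have "s = (s - 4) + 4" by simp
      then show "\<exists>t\<in>S0. s = t + 4" using h by blast
    qed
    then show ?thesis unfolding Apery_def S0_m by simp
  qed
  also have "\<dots> = {0,5,6,11}" unfolding S0_char by auto
  finally show ?thesis .
qed

lemma two_three: "{2..3::nat} = {2,3}" by auto

lemma S0_box: "d 2 = 1 \<Longrightarrow> d 3 = 1 \<Longrightarrow> box S0 d = {0,5,6,11}"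
proof -
  assume d: "d 2 = 1" "d 3 = 1"
  have "box S0 d = {l 2 * 5 + l 3 * 6 | l :: nat \<Rightarrow> nat. l 2 \<le> 1 \<and> l 3 \<le> 1}"
    unfolding box_def S0_emb two_three using d by (simp add: S0_g2 S0_g3)
  also have "\<dots> = {0,5,6,11}"
  proof (intro set_eqI iffI)
    fix x assume "x \<in> {l 2 * 5 + l 3 * 6 | l :: nat \<Rightarrow> nat. l 2 \<le> 1 \<and> l 3 \<le> 1}"
    then obtain l :: "nat \<Rightarrow> nat" where "x = l 2 * 5 + l 3 * 6" "l 2 \<le> 1" "l 3 \<le> 1" by blast
    then show "x \<in> {0,5,6,11}" by (auto simp: le_Suc_eq)
  next
    fix x :: nat assume "x \<in> {0,5,6,11}"
    then consider "x = 0" | "x = 5" | "x = 6" | "x = 11" by auto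
    then show "x \<in> {l 2 * 5 + l 3 * 6 | l :: nat \<Rightarrow> nat. l 2 \<le> 1 \<and> l 3 \<le> 1}"
    proof cases
      case 1 then show ?thesis by (auto intro!: exI[of _ "\<lambda>j. 0"])
    next
      case 2 then show ?thesis by (auto intro!: exI[of _ "\<lambda>j. if j = 2 then 1 else 0"])
    next
      case 3 then show ?thesis by (auto intro!: exI[of _ "\<lambda>j. if j = 3 then 1 else 0"])
    next
      case 4 then show ?thesis by (auto intro!: exI[of _ "\<lambda>j. 1"])
    qed
  qed
  finally show ?thesis .
qed

lemma S0_repr: "is_repr S0 x l \<longleftrightarrow> x = l 1 * 4 + l 2 * 5 + l 3 * 6" for l :: "nat \<Rightarrow> nat"
proof -
  have "{1..3::nat} = {1,2,3}" by auto
  then show ?thesis unfolding is_repr_def S0_emb by (simp add: S0_g1[simplified] S0_g2 S0_g3 add.assoc)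
qed

lemma S0_sumrep: "(\<Sum>i=1..emb S0. l i) = l 1 + l 2 + l 3" for l :: "nat \<Rightarrow> nat"
proof -
  have "{1..3::nat} = {1,2,3}" by auto
  then show ?thesis unfolding S0_emb by (simp add: add.assoc)
qed

lemma S0_ord0: "ord S0 0 = 0"
proof -
  have "{(\<Sum>i=1..emb S0. l i) | l. is_repr S0 0 l} = {0}"
    unfolding S0_repr S0_sumrep by (auto intro!: exI[of _ "\<lambda>j. 0"])
  then show ?thesis unfolding ord_def by simp
qed

lemma ordX5: "x = l1 + l2 + l3 \<Longrightarrow> 5 = l1 * 4 + l2 * 5 + l3 * (6::nat) \<Longrightarrow> x \<in> {1}"
proof -
  assume x: "x = l1 + l2 + l3" and e: "5 = l1 * 4 + l2 * 5 + l3 * (6::nat)"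
  have "l3 = 0" "l1 \<le> 1" "l2 \<le> 1" using e by linarith+
  then have "l3 = 0" "l1 = 0 \<or> l1 = 1" "l2 = 0 \<or> l2 = 1" by auto
  then show ?thesis using x e by auto
qed

lemma ordX6: "x = l1 + l2 + l3 \<Longrightarrow> 6 = l1 * 4 + l2 * 5 + l3 * (6::nat) \<Longrightarrow> x \<in> {1}"
proof -
  assume x: "x = l1 + l2 + l3" and e: "6 = l1 * 4 + l2 * 5 + l3 * (6::nat)"
  have "l3 \<le> 1" "l1 \<le> 1" "l2 \<le> 1" using e by linarith+
  then have "l3 = 0 \<or> l3 = 1" "l1 = 0 \<or> l1 = 1" "l2 = 0 \<or> l2 = 1" by auto
  then show ?thesis using x e by auto
qed

lemma h5: "h * 5 \<in> {0,5,6,11::nat} \<longleftrightarrow> h \<in> {0,1}"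
proof (cases "h < 3")
  case True then have "h = 0 \<or> h = 1 \<or> h = 2" by linarith
  then show ?thesis by auto
next
  case False then have "h * 5 \<ge> 15" by simp
  then show ?thesis using False by auto
qed

lemma h6: "h * 6 \<in> {0,5,6,11::nat} \<longleftrightarrow> h \<in> {0,1}"
proof (cases "h < 2")
  case True then have "h = 0 \<or> h = 1" by linarith
  then show ?thesis by auto
next
  case False then have "h * 6 \<ge> 12" by simp
  then show ?thesis using False by auto
qed

lemma S0_ord5: "ord S0 5 = 1"
proof -
  have "{(\<Sum>i=1..emb S0. l i) | l. is_repr S0 5 l} = {1}"
  proof (intro set_eqI iffI)
    fix x assume "x \<in> {(\<Sum>i=1..emb S0. l i) | l. is_repr S0 5 l}"
    then obtain l :: "nat \<Rightarrow> nat" where "x = l 1 + l 2 + l 3" "5 = l 1 * 4 + l 2 * 5 + l 3 * 6"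
      unfolding S0_repr S0_sumrep by blast
    then show "x \<in> {1}" by (rule ordX5)
  next
    fix x assume "x \<in> {1::nat}"
    then show "x \<in> {(\<Sum>i=1..emb S0. l i) | l. is_repr S0 5 l}"
      unfolding S0_repr S0_sumrep by (auto intro!: exI[of _ "\<lambda>j. if j = 2 then 1 else 0"])
  qed
  then show ?thesis unfolding ord_def by simp
qed

lemma S0_ord6: "ord S0 6 = 1"
proof -
  have "{(\<Sum>i=1..emb S0. l i) | l. is_repr S0 6 l} = {1}"
  proof (intro set_eqI iffI)
    fix x assume "x \<in> {(\<Sum>i=1..emb S0. l i) | l. is_repr S0 6 l}"
    then obtain l :: "nat \<Rightarrow> nat" where "x = l 1 + l 2 + l 3" "6 = l 1 * 4 + l 2 * 5 + l 3 * 6"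
      unfolding S0_repr S0_sumrep by blast
    then show "x \<in> {1}" by (rule ordX6)
  next
    fix x assume "x \<in> {1::nat}"
    then show "x \<in> {(\<Sum>i=1..emb S0. l i) | l. is_repr S0 6 l}"
      unfolding S0_repr S0_sumrep by (auto intro!: exI[of _ "\<lambda>j. if j = 3 then 1 else 0"])
  qed
  then show ?thesis unfolding ord_def by simp
qed

lemma S0_alpha2: "alpha S0 2 = 1"
proof -
  have "{h. h * gen S0 2 \<in> Apery S0} = {0,1}" unfolding S0_g2 S0_Ap h5 by auto
  then show ?thesis unfolding alpha_def by simp
qed

lemma S0_alpha3: "alpha S0 3 = 1"
proof -
  have "{h. h * gen S0 3 \<in> Apery S0} = {0,1}" unfolding S0_g3 S0_Ap h6 by auto
  then show ?thesis unfolding alpha_def by simp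
qed

lemma S0_beta2: "beta S0 2 = 1"
proof -
  have "{h. h * gen S0 2 \<in> Apery S0 \<and> ord S0 (h * gen S0 2) = h} = {0,1}"
    unfolding S0_g2 S0_Ap h5 using S0_ord0 S0_ord5 by auto
  then show ?thesis unfolding beta_def by simp
qed

lemma S0_beta3: "beta S0 3 = 1"
proof -
  have "{h. h * gen S0 3 \<in> Apery S0 \<and> ord S0 (h * gen S0 3) = h} = {0,1}"
    unfolding S0_g3 S0_Ap h6 using S0_ord0 S0_ord6 by auto
  then show ?thesis unfolding beta_def by simp
qed

lemma S0_tau2: "tau S0 2 = 3"
proof -
  have e21: "(2::nat) - 1 = 1" by simp
  have gu: "gen_upto S0 1 = {l 1 * 4 | l :: nat \<Rightarrow> nat. True}" unfolding gen_upto_def by (simp add: S0_g1[simplified])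
  have "(LEAST h. h > 0 \<and> h * gen S0 2 \<in> gen_upto S0 (2 - 1)) = 4"
  proof (rule Least_equality)
    show "4 > (0::nat) \<and> 4 * gen S0 2 \<in> gen_upto S0 (2 - 1)"
      unfolding e21 gu S0_g2 by (auto intro!: exI[of _ "\<lambda>j. 5"])
  next
    fix y assume "y > 0 \<and> y * gen S0 2 \<in> gen_upto S0 (2 - 1)"
    then obtain l :: "nat \<Rightarrow> nat" where "y > 0" "y * 5 = l 1 * 4" unfolding e21 gu S0_g2 by auto
    show "4 \<le> y"
    proof (rule ccontr)
      assume "\<not> 4 \<le> y"
      then have "y = 1 \<or> y = 2 \<or> y = 3" using \<open>y > 0\<close> by linarith
      moreover have "(y * 5) mod 4 = 0" using \<open>y * 5 = l 1 * 4\<close> by simp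
      ultimately show False by auto
    qed
  qed
  then show ?thesis unfolding tau_def by simp
qed

lemma S0_part: "numerical_semigroup S0 \<and> rectangular S0 (alpha S0) \<and> rectangular S0 (beta S0) \<and> \<not> telescopic S0"
proof (intro conjI)
  show "numerical_semigroup S0" by (rule S0_ns)
  show "rectangular S0 (alpha S0)" unfolding rectangular_def S0_Ap
    by (rule S0_box[symmetric]) (simp_all add: S0_alpha2 S0_alpha3)
  show "rectangular S0 (beta S0)" unfolding rectangular_def S0_Ap
    by (rule S0_box[symmetric]) (simp_all add: S0_beta2 S0_beta3)
  have "(10::nat) \<in> box S0 (tau S0)"
    unfolding box_def S0_emb two_three
    by (auto simp: S0_g2 S0_g3 S0_tau2 intro!: exI[of _ "\<lambda>j. if j = 2 then 2 else 0"])
  show "\<not> telescopic S0"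
  proof
    assume "telescopic S0"
    then have "box S0 (tau S0) = {0,5,6,11}" unfolding telescopic_def S0_Ap by simp
    then show False using \<open>(10::nat) \<in> box S0 (tau S0)\<close> by simp
  qed
qed


theorem mainTheorem7:
  shows "(\<forall>S. numerical_semigroup S \<and> telescopic S \<longrightarrow> rectangular S (beta S)) \<and>
    (let S = {4 * a + 5 * b + 6 * c | a b c :: nat. True} in
       numerical_semigroup S \<and> rectangular S (alpha S) \<and> rectangular S (beta S) \<and>
       \<not> telescopic S)"
proof
  show "\<forall>S. numerical_semigroup S \<and> telescopic S \<longrightarrow> rectangular S (beta S)" using part1 by blast
  show "let S = {4 * a + 5 * b + 6 * c | a b c :: nat. True} in
       numerical_semigroup S \<and> rectangular S (alpha S) \<and> rectangular S (beta S) \<and>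
       \<not> telescopic S" using S0_part unfolding S0_def Let_def .
qed

end
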